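(* Let $T\in\mathbb{R}^{n\times n}$ be substochastic and such that $A=I-T$ is a lower Hessenberg invertible M-matrix. Let $P_{GS}=\operatorname{tril}(A)^{-1}(\operatorname{tril}(A)-A)$ and $P_{AGS}=\operatorname{triu}(A)^{-1}(\operatorname{triu}(A)-A)$. Then $\rho(P_{GS})\geq\rho(P_{AGS})$.
   Context: $T$ is substochastic if $T\geq 0$ entrywise and $T\mathbf{1}\leq\mathbf{1}$, with $\mathbf{1}$ the all-ones vector. $A$ is lower Hessenberg if $A_{ij}=0$ whenever $j>i+1$. $\operatorname{tril}(A)$ (resp. $\operatorname{triu}(A)$) is the lower (resp. upper) triangular part of $A$ including the diagonal. $\rho(\cdot)$ denotes the spectral radius. *)

theory Defs
  imports "Jordan_Normal_Form.Spectral_Radius"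
begin

definition nonneg_mat :: "real mat \<Rightarrow> bool" where
  "nonneg_mat A \<longleftrightarrow> (\<forall>i < dim_row A. \<forall>j < dim_col A. A $$ (i, j) \<ge> 0)"

definition substochastic :: "real mat \<Rightarrow> bool" where
  "substochastic T \<longleftrightarrow> nonneg_mat T \<and>
     (\<forall>i < dim_row T. (\<Sum>j < dim_col T. T $$ (i, j)) \<le> 1)"

definition lower_hessenberg :: "real mat \<Rightarrow> bool" where
  "lower_hessenberg A \<longleftrightarrow>
     (\<forall>i < dim_row A. \<forall>j < dim_col A. j > i + 1 \<longrightarrow> A $$ (i, j) = 0)"

definition tril :: "real mat \<Rightarrow> real mat" where
  "tril A = mat (dim_row A) (dim_col A) (\<lambda>(i, j). if j \<le> i then A $$ (i, j) else 0)"

definition triu :: "real mat \<Rightarrow> real mat" where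
  "triu A = mat (dim_row A) (dim_col A) (\<lambda>(i, j). if i \<le> j then A $$ (i, j) else 0)"

definition rho :: "real mat \<Rightarrow> real" where
  "rho A = spectral_radius (map_mat complex_of_real A)"

text \<open>Matrix inverse (meaningful for invertible matrices).\<close>
definition mat_inv :: "real mat \<Rightarrow> real mat" where
  "mat_inv A = (SOME B. inverts_mat A B \<and> inverts_mat B A)"

definition M_matrix :: "real mat \<Rightarrow> bool" where
  "M_matrix A \<longleftrightarrow> square_mat A \<and>
     (\<exists>s B. B \<in> carrier_mat (dim_row A) (dim_row A) \<and> nonneg_mat B \<and>
            A = s \<cdot>\<^sub>m 1\<^sub>m (dim_row A) - B \<and> s \<ge> rho B)"

definition invertible_M_matrix :: "real mat \<Rightarrow> bool" where
  "invertible_M_matrix A \<longleftrightarrow> M_matrix A \<and> invertible_mat A"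

end

theory Submission
  imports Defs
begin

lemma smult_mat_vec_index:
  assumes "A \<in> carrier_mat nr nc" "v \<in> carrier_vec nc" "i < nr"
  shows "((c \<cdot>\<^sub>m A) *\<^sub>v v) $ i = c * ((A *\<^sub>v v) $ i)"
  using assms by (simp add: scalar_prod_def sum_distrib_left mult.assoc)

lemma mat_vec_index_sum:
  assumes "A \<in> carrier_mat nr nc" "v \<in> carrier_vec nc" "i < nr"
  shows "(A *\<^sub>v v) $ i = (\<Sum>j<nc. A $$ (i,j) * v $ j)"
  using assms by (auto simp: scalar_prod_def lessThan_atLeast0 intro!: sum.cong)

lemma mat_mult_index_sum:
  assumes "A \<in> carrier_mat nr n" "B \<in> carrier_mat n nc" "i < nr" "k < nc"
  shows "(A * B) $$ (i,k) = (\<Sum>j<n. A $$ (i,j) * B $$ (j,k))"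
  using assms by (auto simp: scalar_prod_def lessThan_atLeast0 intro!: sum.cong)

lemma mult_zero_vec_carrier:
  assumes "A \<in> carrier_mat nr nc" shows "A *\<^sub>v 0\<^sub>v nc = 0\<^sub>v nr"
  using assms by (intro eq_vecI) (auto simp: scalar_prod_def)

lemma inv_exists_props:
  assumes A: "A \<in> carrier_mat n n" and ex: "\<exists>B. inverts_mat A B \<and> inverts_mat B A"
  shows "mat_inv A \<in> carrier_mat n n" "A * mat_inv A = 1\<^sub>m n" "mat_inv A * A = 1\<^sub>m n"
proof -
  define C where "C = mat_inv A"
  have C: "inverts_mat A C \<and> inverts_mat C A"
    unfolding C_def mat_inv_def by (rule someI_ex[OF ex])
  hence AC: "A * C = 1\<^sub>m n" and CA: "C * A = 1\<^sub>m (dim_row C)"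
    using A by (auto simp: inverts_mat_def)
  have "dim_col C = n" using arg_cong[OF AC, of dim_col] by simp
  moreover have "dim_row C = n" using arg_cong[OF CA, of dim_col] A by simp
  ultimately show "mat_inv A \<in> carrier_mat n n" unfolding C_def by auto
  show "A * mat_inv A = 1\<^sub>m n" using AC C_def by simp
  show "mat_inv A * A = 1\<^sub>m n" using CA \<open>dim_row C = n\<close> C_def by simp
qed

lemma det_inv_props:
  assumes A: "A \<in> carrier_mat n n" and d: "det A \<noteq> 0"
  shows "mat_inv A \<in> carrier_mat n n" "A * mat_inv A = 1\<^sub>m n" "mat_inv A * A = 1\<^sub>m n"
proof -
  from det_non_zero_imp_unit[OF A d, of undefined]
  obtain B where B: "B \<in> carrier_mat n n" "B * A = 1\<^sub>m n" "A * B = 1\<^sub>m n"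
    unfolding Units_def ring_mat_def by auto
  have ex: "\<exists>B. inverts_mat A B \<and> inverts_mat B A"
    using A B by (auto simp: inverts_mat_def)
  from inv_exists_props[OF A ex]
  show "mat_inv A \<in> carrier_mat n n" "A * mat_inv A = 1\<^sub>m n" "mat_inv A * A = 1\<^sub>m n" by auto
qed

lemma invertible_props:
  assumes A: "(A :: real mat) \<in> carrier_mat n n" and inv: "invertible_mat A"
  shows "\<exists>B \<in> carrier_mat n n. A * B = 1\<^sub>m n \<and> B * A = 1\<^sub>m n"
proof -
  have ex: "\<exists>B. inverts_mat A B \<and> inverts_mat B A" using inv unfolding invertible_mat_def by auto
  from inv_exists_props[OF A ex] show ?thesis by blast
qed

lemma sr_smult:
  fixes A :: "complex mat"
  assumes A: "A \<in> carrier_mat n n" and n: "n > 0" and c: "c \<noteq> 0"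
  shows "spectral_radius (c \<cdot>\<^sub>m A) \<le> norm c * spectral_radius A"
proof -
  have cA: "c \<cdot>\<^sub>m A \<in> carrier_mat n n" using A by auto
  from spectral_radius_mem_max(1)[OF cA n] obtain mu where
    mu: "mu \<in> spectrum (c \<cdot>\<^sub>m A)" and eq: "spectral_radius (c \<cdot>\<^sub>m A) = norm mu" by auto
  from mu obtain v where ev: "eigenvector (c \<cdot>\<^sub>m A) v mu"
    unfolding spectrum_def eigenvalue_def by auto
  hence v: "v \<in> carrier_vec n" "v \<noteq> 0\<^sub>v n" and eqv: "(c \<cdot>\<^sub>m A) *\<^sub>v v = mu \<cdot>\<^sub>v v"
    unfolding eigenvector_def using A by auto
  have "A *\<^sub>v v = (mu / c) \<cdot>\<^sub>v v"
  proof (rule eq_vecI)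
    fix i assume "i < dim_vec ((mu / c) \<cdot>\<^sub>v v)"
    hence i: "i < n" using v by auto
    have "c * (A *\<^sub>v v) $ i = mu * v $ i"
      using smult_mat_vec_index[OF A v(1) i, of c] arg_cong[OF eqv, of "\<lambda>w. w $ i"] i v A by auto
    thus "(A *\<^sub>v v) $ i = ((mu / c) \<cdot>\<^sub>v v) $ i" using c i v by (auto simp: field_simps)
  qed (use A v in auto)
  hence "eigenvector A v (mu / c)" unfolding eigenvector_def using v A by auto
  hence "mu / c \<in> spectrum A" unfolding spectrum_def eigenvalue_def by auto
  from spectral_radius_mem_max(2)[OF A n] this have "norm (mu / c) \<le> spectral_radius A" by auto
  hence "norm mu \<le> norm c * spectral_radius A" using c by (auto simp: norm_divide field_simps)
  thus ?thesis using eq by simp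
qed


lemma growth:
  fixes M :: "real mat"
  assumes M: "M \<in> carrier_mat n n" and y: "y \<in> carrier_vec n"
    and mono: "\<forall>v\<in>carrier_vec n. (\<forall>i<n. 0 \<le> v$i) \<longrightarrow> (\<forall>i<n. 0 \<le> (M *\<^sub>v v)$i)"
    and ineq: "\<forall>i<n. t * y$i \<le> (M *\<^sub>v y)$i" and t: "0 \<le> t"
  shows "\<forall>i<n. t^k * y$i \<le> (M ^\<^sub>m k *\<^sub>v y)$i"
proof -
  have pnn: "\<forall>v\<in>carrier_vec n. (\<forall>i<n. 0 \<le> v$i) \<longrightarrow> (\<forall>i<n. 0 \<le> (M ^\<^sub>m k *\<^sub>v v)$i)" for k
  proof (induction k)
    case 0
    then show ?case using M by auto
  next
    case (Suc k)
    show ?case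
    proof (intro ballI impI allI)
      fix v :: "real vec" and i :: nat assume v: "v \<in> carrier_vec n" and nn: "\<forall>i<n. 0 \<le> v$i" and i: "i < n"
      have "M ^\<^sub>m Suc k *\<^sub>v v = M ^\<^sub>m k *\<^sub>v (M *\<^sub>v v)" using M v by (simp add: assoc_mult_mat_vec[of _ n n])
      moreover have "M *\<^sub>v v \<in> carrier_vec n" using M v by auto
      ultimately show "0 \<le> (M ^\<^sub>m Suc k *\<^sub>v v)$i" using Suc.IH mono v nn i by auto
    qed
  qed
  show ?thesis
  proof (induction k)
    case 0
    then show ?case using M y by auto
  next
    case (Suc k)
    define w where "w = M *\<^sub>v y - t \<cdot>\<^sub>v y"
    have w: "w \<in> carrier_vec n" using M y unfolding w_def by auto
    have wnn: "\<forall>i<n. 0 \<le> w$i" using ineq M y unfolding w_def by auto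
    have My: "M *\<^sub>v y = w + t \<cdot>\<^sub>v y" unfolding w_def using M y by (intro eq_vecI) auto
    have Mk: "M ^\<^sub>m k \<in> carrier_mat n n" using M by auto
    have "M ^\<^sub>m Suc k *\<^sub>v y = M ^\<^sub>m k *\<^sub>v (M *\<^sub>v y)" using M y by (simp add: assoc_mult_mat_vec[of _ n n])
    also have "\<dots> = M ^\<^sub>m k *\<^sub>v w + t \<cdot>\<^sub>v (M ^\<^sub>m k *\<^sub>v y)"
      unfolding My using mult_add_distrib_mat_vec[OF Mk w, of "t \<cdot>\<^sub>v y"] mult_mat_vec[OF Mk y] y by auto
    finally have eq: "M ^\<^sub>m Suc k *\<^sub>v y = M ^\<^sub>m k *\<^sub>v w + t \<cdot>\<^sub>v (M ^\<^sub>m k *\<^sub>v y)" .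
    show ?case
    proof (intro allI impI)
      fix i assume i: "i < n"
      have "0 \<le> (M ^\<^sub>m k *\<^sub>v w)$i" using pnn w wnn i by auto
      moreover have "t^k * y$i \<le> (M ^\<^sub>m k *\<^sub>v y)$i" using Suc.IH i by auto
      ultimately show "t ^ Suc k * y$i \<le> (M ^\<^sub>m Suc k *\<^sub>v y)$i"
      proof -
        have "t ^ Suc k * y$i = t * (t^k * y$i)" by simp
        also have "\<dots> \<le> t * (M ^\<^sub>m k *\<^sub>v y)$i" using \<open>t^k * y$i \<le> _\<close> t by (rule mult_left_mono)
        also have "\<dots> \<le> (M ^\<^sub>m k *\<^sub>v w)$i + t * (M ^\<^sub>m k *\<^sub>v y)$i" using \<open>0 \<le> (M ^\<^sub>m k *\<^sub>v w)$i\<close> by simp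
        also have "\<dots> = (M ^\<^sub>m k *\<^sub>v w + t \<cdot>\<^sub>v (M ^\<^sub>m k *\<^sub>v y))$i" using i carrier_matD[OF Mk] by simp
        finally show ?thesis unfolding eq .
      qed
    qed
  qed
qed


lemma cw_lower:
  fixes M :: "real mat"
  assumes M: "M \<in> carrier_mat n n" and y: "y \<in> carrier_vec n"
    and ynn: "\<forall>i<n. 0 \<le> y$i" and i0: "i0 < n" "0 < y$i0" and t: "0 < t"
    and mono: "\<forall>v\<in>carrier_vec n. (\<forall>i<n. 0 \<le> v$i) \<longrightarrow> (\<forall>i<n. 0 \<le> (M *\<^sub>v v)$i)"
    and ineq: "\<forall>i<n. t * y$i \<le> (M *\<^sub>v y)$i"
  shows "t \<le> rho M"
proof (rule ccontr)
  assume "\<not> t \<le> rho M" hence lt: "rho M < t" by simp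
  have n: "n > 0" using i0 by auto
  let ?Mc = "map_mat complex_of_real M"
  have Mc: "?Mc \<in> carrier_mat n n" using M by auto
  from spectral_radius_mem_max(1)[OF Mc n] have r0: "0 \<le> rho M" unfolding rho_def by auto
  define s where "s = (rho M + t)/2"
  have s: "0 < s" "rho M < s" "s < t" using r0 lt unfolding s_def by auto
  define M' where "M' = (1/s) \<cdot>\<^sub>m M"
  have M': "M' \<in> carrier_mat n n" using M unfolding M'_def by auto
  have mapM': "map_mat complex_of_real M' = complex_of_real (1/s) \<cdot>\<^sub>m ?Mc"
    by (rule eq_matI) (auto simp: M'_def)
  have "spectral_radius (map_mat complex_of_real M') \<le> norm (complex_of_real (1/s)) * spectral_radius ?Mc"
    unfolding mapM' by (rule sr_smult[OF Mc n]) (use s in auto)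
  also have "\<dots> = rho M / s" using s unfolding rho_def by (simp add: norm_divide)
  also have "\<dots> < 1" using s by simp
  finally have sr1: "spectral_radius (map_mat complex_of_real M') < 1" .
  have M'c: "map_mat complex_of_real M' \<in> carrier_mat n n" using M' by auto
  from spectral_radius_jnf_norm_bound_less_1_upper_triangular[OF M'c sr1]
  obtain cb where cb: "\<And>k. norm_bound (map_mat complex_of_real M' ^\<^sub>m k) cb" by auto
  have Mv: "(M' *\<^sub>v v)$i = (1/s) * (M *\<^sub>v v)$i" if "v \<in> carrier_vec n" "i < n" for v i
    unfolding M'_def by (rule smult_mat_vec_index[OF M that])
  have mono': "\<forall>v\<in>carrier_vec n. (\<forall>i<n. 0 \<le> v$i) \<longrightarrow> (\<forall>i<n. 0 \<le> (M' *\<^sub>v v)$i)"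
    using mono Mv s by auto
  have ineq': "\<forall>i<n. (t/s) * y$i \<le> (M' *\<^sub>v y)$i"
  proof (intro allI impI)
    fix i assume i: "i < n"
    have "t * y$i \<le> (M *\<^sub>v y)$i" using ineq i by auto
    hence "(t * y$i) / s \<le> (M *\<^sub>v y)$i / s" using s by (simp add: divide_right_mono)
    thus "(t/s) * y$i \<le> (M' *\<^sub>v y)$i" using Mv[OF y i] by simp
  qed
  have gr: "\<forall>i<n. (t/s)^k * y$i \<le> (M' ^\<^sub>m k *\<^sub>v y)$i" for k
    by (rule growth[OF M' y mono' ineq']) (use s t in auto)
  define S where "S = (\<Sum>j<n. y$j)"
  have bnd: "(M' ^\<^sub>m k *\<^sub>v y)$i0 \<le> cb * S" for k
  proof -
    have Mk: "M' ^\<^sub>m k \<in> carrier_mat n n" using M' by auto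
    have ent: "(M' ^\<^sub>m k) $$ (i0, j) \<le> cb" if j: "j < n" for j
    proof -
      have "norm ((map_mat complex_of_real M' ^\<^sub>m k) $$ (i0, j)) \<le> cb"
        using cb[of k] i0 j M'c unfolding norm_bound_def by auto
      moreover have "(map_mat complex_of_real M' ^\<^sub>m k) = map_mat complex_of_real (M' ^\<^sub>m k)"
        by (rule sym[OF of_real_hom.mat_hom_pow[OF M', of k]])
      ultimately have "norm (complex_of_real ((M' ^\<^sub>m k) $$ (i0, j))) \<le> cb"
        using i0 j carrier_matD[OF Mk] by simp
      thus ?thesis by simp
    qed
    have "(M' ^\<^sub>m k *\<^sub>v y)$i0 = (\<Sum>j<n. (M' ^\<^sub>m k) $$ (i0, j) * y$j)"
      by (rule mat_vec_index_sum[OF Mk y i0(1)])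
    also have "\<dots> \<le> (\<Sum>j<n. cb * y$j)"
      by (rule sum_mono) (use ent ynn in \<open>auto intro: mult_right_mono\<close>)
    also have "\<dots> = cb * S" unfolding S_def by (simp add: sum_distrib_left)
    finally show ?thesis .
  qed
  have "1 < t/s" using s by simp
  from real_arch_pow[OF this, of "cb * S / y$i0"] obtain k where k: "cb * S / y$i0 < (t/s)^k" by auto
  have "(t/s)^k * y$i0 \<le> cb * S" using gr[of k] bnd[of k] i0 by force
  hence "(t/s)^k \<le> cb * S / y$i0" using i0 by (simp add: pos_le_divide_eq)
  thus False using k by simp
qed


lemma singular_lemma:
  fixes T :: "real mat" and x :: "nat \<Rightarrow> real"
  assumes T: "T \<in> carrier_mat n n"
    and Tnn: "\<And>i j. i < n \<Longrightarrow> j < n \<Longrightarrow> 0 \<le> T $$ (i,j)"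
    and rows: "\<And>i. i < n \<Longrightarrow> (\<Sum>j<n. T $$ (i,j)) \<le> 1"
    and xnn: "\<And>i. i < n \<Longrightarrow> 0 \<le> x i" and i0: "i0 < n" "0 < x i0"
    and le: "\<And>i. i < n \<Longrightarrow> x i \<le> (\<Sum>j<n. T $$ (i,j) * x j)"
  shows "\<not> invertible_mat (1\<^sub>m n - T)"
proof
  assume inv: "invertible_mat (1\<^sub>m n - T)"
  define A where "A = 1\<^sub>m n - T"
  have A: "A \<in> carrier_mat n n" using T unfolding A_def by auto
  have Aij: "A $$ (i,j) = (if i = j then 1 else 0) - T $$ (i,j)" if "i < n" "j < n" for i j
    using that T unfolding A_def by auto
  from invertible_props[OF A inv[folded A_def]] obtain B where
    B: "B \<in> carrier_mat n n" and AB: "A * B = 1\<^sub>m n" by auto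
  define m where "m = Max (x ` {..<n})"
  have xm: "x i \<le> m" if "i < n" for i unfolding m_def using that by auto
  have m0: "0 < m" using xm[OF i0(1)] i0 by auto
  define K where "K = {i. i < n \<and> x i = m}"
  have "m \<in> x ` {..<n}" unfolding m_def using i0 by (intro Max_in) auto
  then obtain k0 where k0: "k0 < n" "x k0 = m" by auto
  have k0K: "k0 \<in> K" using k0 unfolding K_def by auto
  have Kprop: "(\<forall>j<n. j \<notin> K \<longrightarrow> T $$ (i,j) = 0) \<and> (\<Sum>j<n. T $$ (i,j)) = 1" if iK: "i \<in> K" for i
  proof -
    have i: "i < n" "x i = m" using iK unfolding K_def by auto
    have s1: "m \<le> (\<Sum>j<n. T $$ (i,j) * x j)" using le[OF i(1)] i by simp
    have s3: "(\<Sum>j<n. T $$ (i,j) * m) = m * (\<Sum>j<n. T $$ (i,j))" by (simp add: sum_distrib_left mult.commute)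
    have s4: "(\<Sum>j<n. T $$ (i,j)) \<le> 1" using rows[OF i(1)] .
    have diff: "(\<Sum>j<n. T $$ (i,j) * (m - x j)) = (\<Sum>j<n. T $$ (i,j) * m) - (\<Sum>j<n. T $$ (i,j) * x j)"
      by (simp add: right_diff_distrib sum_subtractf)
    have "m * (\<Sum>j<n. T $$ (i,j)) \<le> m" using s4 m0 by (simp add: mult_left_le)
    hence "(\<Sum>j<n. T $$ (i,j) * (m - x j)) \<le> 0" using diff s1 s3 by linarith
    moreover have tnn: "\<forall>j\<in>{..<n}. 0 \<le> T $$ (i,j) * (m - x j)" using Tnn i xm by auto
    ultimately have "(\<Sum>j<n. T $$ (i,j) * (m - x j)) = 0" 
    proof -
      have "0 \<le> (\<Sum>j<n. T $$ (i,j) * (m - x j))" using tnn by (intro sum_nonneg) blast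
      thus ?thesis using \<open>(\<Sum>j<n. T $$ (i,j) * (m - x j)) \<le> 0\<close> by linarith
    qed
    hence z: "\<forall>j\<in>{..<n}. T $$ (i,j) * (m - x j) = 0" using sum_nonneg_eq_0_iff[of "{..<n}" "\<lambda>j. T $$ (i,j) * (m - x j)"] tnn by blast
    have p1: "\<forall>j<n. j \<notin> K \<longrightarrow> T $$ (i,j) = 0"
    proof (intro allI impI)
      fix j assume j: "j < n" "j \<notin> K"
      hence "x j < m" using xm[OF j(1)] unfolding K_def by auto
      thus "T $$ (i,j) = 0" using z j by auto
    qed
    have "m \<le> m * (\<Sum>j<n. T $$ (i,j))"
    proof -
      have "(\<Sum>j<n. T $$ (i,j) * x j) \<le> (\<Sum>j<n. T $$ (i,j) * m)"
        by (rule sum_mono) (use Tnn i xm in \<open>auto intro: mult_left_mono\<close>)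
      thus ?thesis using s1 s3 by linarith
    qed
    hence "1 \<le> (\<Sum>j<n. T $$ (i,j))" using m0 by (simp add: mult_le_cancel_left1)
    hence "(\<Sum>j<n. T $$ (i,j)) = 1" using s4 by linarith
    with p1 show ?thesis by blast
  qed
  have AK0: "A $$ (i,j) = 0" if "i \<in> K" "j < n" "j \<notin> K" for i j
  proof -
    have "i < n" "i \<noteq> j" using that unfolding K_def by auto
    thus ?thesis using Aij[of i j] Kprop[OF that(1)] that by auto
  qed
  define A' where "A' = mat n n (\<lambda>(i,j). if i \<in> K then A $$ (i,j) else (if i = j then 1 else 0))"
  define B' where "B' = mat n n (\<lambda>(i,j). if i \<in> K \<and> j \<in> K then B $$ (i,j) else (if i = j then 1 else 0))"
  have A': "A' \<in> carrier_mat n n" and B': "B' \<in> carrier_mat n n" unfolding A'_def B'_def by auto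
  have AB': "A' * B' = 1\<^sub>m n"
  proof (rule eq_matI)
    fix i k assume "i < dim_row (1\<^sub>m n :: real mat)" "k < dim_col (1\<^sub>m n :: real mat)"
    hence i: "i < n" and k: "k < n" by auto
    have e: "(A' * B') $$ (i,k) = (\<Sum>j<n. A' $$ (i,j) * B' $$ (j,k))"
      by (rule mat_mult_index_sum[OF A' B' i k])
    show "(A' * B') $$ (i,k) = 1\<^sub>m n $$ (i,k)"
    proof (cases "i \<in> K")
      case iK: True
      show ?thesis
      proof (cases "k \<in> K")
        case kK: True
        have "(\<Sum>j<n. A' $$ (i,j) * B' $$ (j,k)) = (\<Sum>j<n. A $$ (i,j) * B $$ (j,k))"
        proof (rule sum.cong)
          fix j assume "j \<in> {..<n}" hence j: "j < n" by auto
          show "A' $$ (i,j) * B' $$ (j,k) = A $$ (i,j) * B $$ (j,k)"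
            using AK0[OF iK j] iK kK i j k unfolding A'_def B'_def by auto
        qed simp
        also have "\<dots> = (A * B) $$ (i,k)" by (rule mat_mult_index_sum[OF A B i k, symmetric])
        finally show ?thesis using e AB by simp
      next
        case kK: False
        have "(\<Sum>j<n. A' $$ (i,j) * B' $$ (j,k)) = (\<Sum>j<n. 0)"
        proof (rule sum.cong)
          fix j assume "j \<in> {..<n}" hence j: "j < n" by auto
          show "A' $$ (i,j) * B' $$ (j,k) = 0"
            using AK0[OF iK j] iK kK i j k unfolding A'_def B'_def by auto
        qed simp
        moreover have "i \<noteq> k" using iK kK by auto
        ultimately show ?thesis using e i k by simp
      qed
    next
      case iK: False
      have "(\<Sum>j<n. A' $$ (i,j) * B' $$ (j,k)) = (\<Sum>j<n. if j = i then B' $$ (i,k) else 0)"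
        by (rule sum.cong) (use iK i in \<open>auto simp: A'_def\<close>)
      also have "\<dots> = B' $$ (i,k)" using i by simp
      also have "\<dots> = 1\<^sub>m n $$ (i,k)" using iK i k unfolding B'_def by auto
      finally show ?thesis using e by simp
    qed
  qed (use A' B' in auto)
  have BA': "B' * A' = 1\<^sub>m n" by (rule mat_mult_left_right_inverse[OF A' B' AB'])
  define v :: "real vec" where "v = vec n (\<lambda>j. if j \<in> K then 1 else 0)"
  have v: "v \<in> carrier_vec n" unfolding v_def by auto
  have Av: "A' *\<^sub>v v = 0\<^sub>v n"
  proof (rule eq_vecI)
    fix i assume "i < dim_vec (0\<^sub>v n :: real vec)"
    hence i: "i < n" by auto
    have e: "(A' *\<^sub>v v) $ i = (\<Sum>j<n. A' $$ (i,j) * v $ j)" by (rule mat_vec_index_sum[OF A' v i])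
    show "(A' *\<^sub>v v) $ i = 0\<^sub>v n $ i"
    proof (cases "i \<in> K")
      case iK: True
      have "(\<Sum>j<n. A' $$ (i,j) * v $ j) = (\<Sum>j<n. (if j = i then 1 else 0) - T $$ (i,j))"
      proof (rule sum.cong)
        fix j assume "j \<in> {..<n}" hence j: "j < n" by auto
        show "A' $$ (i,j) * v $ j = (if j = i then 1 else 0) - T $$ (i,j)"
          using AK0[OF iK j] Aij[OF i j] iK i j unfolding A'_def v_def by auto
      qed simp
      also have "\<dots> = 1 - (\<Sum>j<n. T $$ (i,j))" using i by (simp add: sum_subtractf)
      also have "\<dots> = 0" using Kprop[OF iK] by simp
      finally show ?thesis using e i by simp
    next
      case iK: False
      have "(\<Sum>j<n. A' $$ (i,j) * v $ j) = (\<Sum>j<n. 0)"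
        by (rule sum.cong) (use iK i in \<open>auto simp: A'_def v_def\<close>)
      thus ?thesis using e i by simp
    qed
  qed (use A' in auto)
  have "v = (B' * A') *\<^sub>v v" unfolding BA' using v by simp
  also have "\<dots> = B' *\<^sub>v (A' *\<^sub>v v)" using A' B' v by (simp add: assoc_mult_mat_vec[of _ n n])
  also have "\<dots> = 0\<^sub>v n" unfolding Av by (rule mult_zero_vec_carrier[OF B'])
  finally have "v $ k0 = 0" using k0 by simp
  thus False using k0 k0K unfolding v_def by simp
qed


theorem theorem8:
  fixes T :: "real mat" and n :: nat
  assumes "T \<in> carrier_mat n n"
    and "substochastic T"
    and "lower_hessenberg (1\<^sub>m n - T)"
    and "invertible_M_matrix (1\<^sub>m n - T)"
  shows "rho (mat_inv (tril (1\<^sub>m n - T)) * (tril (1\<^sub>m n - T) - (1\<^sub>m n - T)))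
         \<ge> rho (mat_inv (triu (1\<^sub>m n - T)) * (triu (1\<^sub>m n - T) - (1\<^sub>m n - T)))"
proof -
  note T = assms(1)
  define A where "A = 1\<^sub>m n - T"
  have A: "A \<in> carrier_mat n n" using T unfolding A_def by auto
  have Aij: "A $$ (i,j) = (if i = j then 1 else 0) - T $$ (i,j)" if "i < n" "j < n" for i j
    using that T unfolding A_def by auto
  have Tnn: "0 \<le> T $$ (i,j)" if "i < n" "j < n" for i j
    using assms(2) that T unfolding substochastic_def nonneg_mat_def by auto
  have rows: "(\<Sum>j<n. T $$ (i,j)) \<le> 1" if "i < n" for i
    using assms(2) that T unfolding substochastic_def by auto
  have invA: "invertible_mat A" using assms(4) unfolding invertible_M_matrix_def A_def by auto
  have hess: "T $$ (i,j) = 0" if "i < n" "j < n" "i + 1 < j" for i j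
  proof -
    have h: "\<forall>i < dim_row A. \<forall>j < dim_col A. j > i + 1 \<longrightarrow> A $$ (i, j) = 0"
      using assms(3) unfolding lower_hessenberg_def A_def by blast
    have "A $$ (i,j) = 0" using h that carrier_matD[OF A] by auto
    thus ?thesis using Aij[OF that(1,2)] that by auto
  qed
  have diag: "T $$ (i,i) < 1" if i: "i < n" for i
  proof (rule ccontr)
    assume "\<not> T $$ (i,i) < 1"
    hence ge: "1 \<le> T $$ (i,i)" by simp
    have "\<not> invertible_mat (1\<^sub>m n - T)"
    proof (rule singular_lemma[OF T Tnn rows, of "\<lambda>r. if r = i then 1 else 0" i])
      fix r assume r: "r < n"
      have "(\<Sum>j<n. T $$ (r,j) * (if j = i then 1 else 0)) = T $$ (r,i)" using i by (simp add: if_distrib cong: if_cong)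
      thus "(if r = i then 1 else 0) \<le> (\<Sum>j<n. T $$ (r,j) * (if j = i then 1 else 0))"
        using ge Tnn[OF r i] by auto
    qed (use i in auto)
    thus False using invA unfolding A_def by simp
  qed
  define d where "d i = 1 - T $$ (i,i)" for i
  define up where "up i j = (if i < j then T $$ (i,j) else 0)" for i j
  define lo where "lo i j = (if j < i then T $$ (i,j) else 0)" for i j
  have d0: "0 < d i" if "i < n" for i using diag[OF that] unfolding d_def by simp
  define L where "L = tril A"
  define U where "U = triu A"
  define N1 where "N1 = L - A"
  define N2 where "N2 = U - A"
  have L: "L \<in> carrier_mat n n" and U: "U \<in> carrier_mat n n" and N1: "N1 \<in> carrier_mat n n"
    and N2: "N2 \<in> carrier_mat n n"
    using A unfolding L_def U_def N1_def N2_def tril_def triu_def by auto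
  have Lij: "L $$ (i,j) = (if i = j then d i else 0) - lo i j" if "i < n" "j < n" for i j
    using that A Aij[OF that] unfolding L_def tril_def d_def lo_def by auto
  have Uij: "U $$ (i,j) = (if i = j then d i else 0) - up i j" if "i < n" "j < n" for i j
    using that A Aij[OF that] unfolding U_def triu_def d_def up_def by auto
  have N1ij: "N1 $$ (i,j) = up i j" if "i < n" "j < n" for i j
    using that A Aij[OF that] unfolding N1_def L_def tril_def up_def by auto
  have N2ij: "N2 $$ (i,j) = lo i j" if "i < n" "j < n" for i j
    using that A Aij[OF that] unfolding N2_def U_def triu_def lo_def by auto
  have detL: "det L \<noteq> 0"
  proof -
    have "det L = prod_list (diag_mat L)"
      by (rule det_lower_triangular[OF _ L]) (use Lij in \<open>auto simp: lo_def\<close>)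
    also have "\<dots> = (\<Prod>i = 0..<n. L $$ (i,i))" using L by (simp add: prod_list_diag_prod)
    also have "\<dots> = (\<Prod>i = 0..<n. d i)" using Lij by (intro prod.cong) (auto simp: lo_def)
    also have "\<dots> > 0" using d0 by (intro prod_pos) auto
    finally show ?thesis by simp
  qed
  have detU: "det U \<noteq> 0"
  proof -
    have "det U = prod_list (diag_mat U)"
      by (rule det_upper_triangular[OF _ U]) (use Uij U in \<open>auto simp: up_def upper_triangular_def\<close>)
    also have "\<dots> = (\<Prod>i = 0..<n. U $$ (i,i))" using U by (simp add: prod_list_diag_prod)
    also have "\<dots> = (\<Prod>i = 0..<n. d i)" using Uij by (intro prod.cong) (auto simp: up_def)
    also have "\<dots> > 0" using d0 by (intro prod_pos) auto
    finally show ?thesis by simp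
  qed
  note Li = det_inv_props[OF L detL]
  note Ui = det_inv_props[OF U detU]
  define PG where "PG = mat_inv L * N1"
  define PA where "PA = mat_inv U * N2"
  have PG: "PG \<in> carrier_mat n n" and PA: "PA \<in> carrier_mat n n"
    unfolding PG_def PA_def using Li Ui N1 N2 by auto
  have Lv: "(L *\<^sub>v v)$i = d i * v$i - (\<Sum>j<n. lo i j * v$j)" if v: "v \<in> carrier_vec n" and i: "i < n" for v i
  proof -
    have "(L *\<^sub>v v)$i = (\<Sum>j<n. L $$ (i,j) * v$j)" by (rule mat_vec_index_sum[OF L v i])
    also have "\<dots> = (\<Sum>j<n. (if j = i then d i * v$i else 0) - lo i j * v$j)"
      by (rule sum.cong) (auto simp: Lij[OF i] left_diff_distrib)
    also have "\<dots> = d i * v$i - (\<Sum>j<n. lo i j * v$j)" using i by (simp add: sum_subtractf)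
    finally show ?thesis .
  qed
  have N1v: "(N1 *\<^sub>v v)$i = (\<Sum>j<n. up i j * v$j)" if v: "v \<in> carrier_vec n" and i: "i < n" for v i
  proof -
    have "(N1 *\<^sub>v v)$i = (\<Sum>j<n. N1 $$ (i,j) * v$j)" by (rule mat_vec_index_sum[OF N1 v i])
    also have "\<dots> = (\<Sum>j<n. up i j * v$j)" by (rule sum.cong) (auto simp: N1ij[OF i])
    finally show ?thesis .
  qed
  have upnn: "0 \<le> up i j" if "i < n" "j < n" for i j using Tnn[OF that] unfolding up_def by auto
  have lonn: "0 \<le> lo i j" if "i < n" "j < n" for i j using Tnn[OF that] unfolding lo_def by auto
  have Lpos: "\<forall>i<n. 0 \<le> w$i" if w: "w \<in> carrier_vec n" and nn: "\<forall>i<n. 0 \<le> (L *\<^sub>v w)$i" for w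
  proof -
    have "i < n \<longrightarrow> 0 \<le> w$i" for i
    proof (induction i rule: less_induct)
      case (less i)
      show ?case
      proof
        assume i: "i < n"
        have "0 \<le> (\<Sum>j<n. lo i j * w$j)"
        proof (rule sum_nonneg)
          fix j assume "j \<in> {..<n}" hence j: "j < n" by auto
          show "0 \<le> lo i j * w$j"
          proof (cases "j < i")
            case True thus ?thesis using less.IH[of j] j lonn[OF i j] by auto
          next
            case False thus ?thesis unfolding lo_def by auto
          qed
        qed
        moreover have "0 \<le> d i * w$i - (\<Sum>j<n. lo i j * w$j)" using nn i Lv[OF w i] by auto
        ultimately have "0 \<le> d i * w$i" by linarith
        thus "0 \<le> w$i" using d0[OF i] by (simp add: zero_le_mult_iff)
      qed
    qed
    thus ?thesis by auto
  qed
  have LPG: "L *\<^sub>v (PG *\<^sub>v v) = N1 *\<^sub>v v" if v: "v \<in> carrier_vec n" for v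
  proof -
    have "PG *\<^sub>v v = mat_inv L *\<^sub>v (N1 *\<^sub>v v)" unfolding PG_def using Li(1) N1 v by simp
    hence "L *\<^sub>v (PG *\<^sub>v v) = (L * mat_inv L) *\<^sub>v (N1 *\<^sub>v v)" using L Li(1) N1 v by simp
    also have "\<dots> = N1 *\<^sub>v v" unfolding Li(2) using N1 v by simp
    finally show ?thesis .
  qed
  have main: "rho PA \<le> rho PG"
  proof (cases "n = 0")
    case True
    have "PA = PG" using PA PG True by (intro eq_matI) auto
    thus ?thesis by simp
  next
    case False
    hence n: "n > 0" by simp
    have PAc: "map_mat complex_of_real PA \<in> carrier_mat n n" using PA by auto
    have PGc: "map_mat complex_of_real PG \<in> carrier_mat n n" using PG by auto
    have rG0: "0 \<le> rho PG" using spectral_radius_mem_max(1)[OF PGc n] unfolding rho_def by auto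
    from spectral_radius_mem_max(1)[OF PAc n] obtain mu where mu: "mu \<in> spectrum (map_mat complex_of_real PA)"
      and rA: "rho PA = norm mu" unfolding rho_def by auto
    show ?thesis
    proof (cases "mu = 0")
      case True thus ?thesis using rA rG0 by simp
    next
      case False
      hence mu0: "mu \<noteq> 0" .
      define t where "t = norm mu"
      have t0: "0 < t" using mu0 unfolding t_def by simp
      from mu obtain z where ev: "eigenvector (map_mat complex_of_real PA) z mu"
        unfolding spectrum_def eigenvalue_def by auto
      hence z: "z \<in> carrier_vec n" "z \<noteq> 0\<^sub>v n" and PAz: "map_mat complex_of_real PA *\<^sub>v z = mu \<cdot>\<^sub>v z"
        unfolding eigenvector_def using PA by auto
      have eqv: "mu \<cdot>\<^sub>v (map_mat complex_of_real U *\<^sub>v z) = map_mat complex_of_real N2 *\<^sub>v z"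
      proof -
        let ?U = "map_mat complex_of_real U" and ?Ui = "map_mat complex_of_real (mat_inv U)"
          and ?N = "map_mat complex_of_real N2"
        have Uc: "?U \<in> carrier_mat n n" and Uic: "?Ui \<in> carrier_mat n n" and Nc: "?N \<in> carrier_mat n n"
          using U Ui(1) N2 by auto
        have UUi: "?U * ?Ui = 1\<^sub>m n"
          using of_real_hom.mat_hom_mult[OF U Ui(1)] Ui(2) of_real_hom.mat_hom_one by metis
        have PAe: "map_mat complex_of_real PA = ?Ui * ?N"
          unfolding PA_def by (rule of_real_hom.mat_hom_mult[OF Ui(1) N2])
        have "?U *\<^sub>v (map_mat complex_of_real PA *\<^sub>v z) = ?U *\<^sub>v (?Ui *\<^sub>v (?N *\<^sub>v z))"
          unfolding PAe using Uic Nc z(1) by simp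
        also have "\<dots> = (?U * ?Ui) *\<^sub>v (?N *\<^sub>v z)" using Uc Uic Nc z(1) by simp
        also have "\<dots> = ?N *\<^sub>v z" unfolding UUi using Nc z(1) by simp
        finally have "?U *\<^sub>v (mu \<cdot>\<^sub>v z) = ?N *\<^sub>v z" unfolding PAz .
        thus ?thesis using mult_mat_vec[OF Uc z(1)] by simp
      qed
      have eqi: "mu * (complex_of_real (d i) * z$i - (\<Sum>j<n. complex_of_real (up i j) * z$j))
         = (\<Sum>j<n. complex_of_real (lo i j) * z$j)" if i: "i < n" for i
      proof -
        let ?U = "map_mat complex_of_real U" and ?N = "map_mat complex_of_real N2"
        have Uc: "?U \<in> carrier_mat n n" and Nc: "?N \<in> carrier_mat n n" using U N2 by auto
        have "(?U *\<^sub>v z)$i = (\<Sum>j<n. ?U $$ (i,j) * z$j)" by (rule mat_vec_index_sum[OF Uc z(1) i])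
        also have "\<dots> = (\<Sum>j<n. (if j = i then complex_of_real (d i) * z$i else 0) - complex_of_real (up i j) * z$j)"
          by (rule sum.cong) (use U i in \<open>auto simp: Uij[OF i] left_diff_distrib\<close>)
        also have "\<dots> = complex_of_real (d i) * z$i - (\<Sum>j<n. complex_of_real (up i j) * z$j)"
          using i by (simp add: sum_subtractf)
        finally have e1: "(?U *\<^sub>v z)$i = complex_of_real (d i) * z$i - (\<Sum>j<n. complex_of_real (up i j) * z$j)" .
        have "(?N *\<^sub>v z)$i = (\<Sum>j<n. ?N $$ (i,j) * z$j)" by (rule mat_vec_index_sum[OF Nc z(1) i])
        also have "\<dots> = (\<Sum>j<n. complex_of_real (lo i j) * z$j)"
          by (rule sum.cong) (use N2 i in \<open>auto simp: N2ij[OF i]\<close>)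
        finally have e2: "(?N *\<^sub>v z)$i = (\<Sum>j<n. complex_of_real (lo i j) * z$j)" .
        have "mu * (?U *\<^sub>v z)$i = (?N *\<^sub>v z)$i"
          using arg_cong[OF eqv, of "\<lambda>v. v $ i"] i Uc by simp
        thus ?thesis unfolding e1 e2 .
      qed
      define x where "x j = norm (z$j)" for j
      have xnn: "0 \<le> x j" for j unfolding x_def by simp
      have I1: "d i * x i \<le> (\<Sum>j<n. up i j * x j) + (1/t) * (\<Sum>j<n. lo i j * x j)" if i: "i < n" for i
      proof -
        define Su where "Su = (\<Sum>j<n. complex_of_real (up i j) * z$j)"
        define Sl where "Sl = (\<Sum>j<n. complex_of_real (lo i j) * z$j)"
        have "mu * (complex_of_real (d i) * z$i - Su) = Sl" using eqi[OF i] unfolding Su_def Sl_def .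
        hence e: "complex_of_real (d i) * z$i = Su + Sl / mu" using mu0 by (simp add: field_simps)
        have "d i * x i = norm (complex_of_real (d i) * z$i)"
          using d0[OF i] unfolding x_def by (simp add: norm_mult)
        also have "\<dots> \<le> norm Su + norm Sl / t" unfolding e t_def
          using norm_triangle_ineq[of Su "Sl / mu"] by (simp add: norm_divide)
        also have "norm Su \<le> (\<Sum>j<n. up i j * x j)"
        proof -
          have "norm Su \<le> (\<Sum>j<n. norm (complex_of_real (up i j) * z$j))" unfolding Su_def by (rule norm_sum)
          also have "\<dots> = (\<Sum>j<n. up i j * x j)"
            by (rule sum.cong) (use upnn i in \<open>auto simp: norm_mult x_def\<close>)
          finally show ?thesis .
        qed
        also have "norm Sl \<le> (\<Sum>j<n. lo i j * x j)"
        proof -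
          have "norm Sl \<le> (\<Sum>j<n. norm (complex_of_real (lo i j) * z$j))" unfolding Sl_def by (rule norm_sum)
          also have "\<dots> = (\<Sum>j<n. lo i j * x j)"
            by (rule sum.cong) (use lonn i in \<open>auto simp: norm_mult x_def\<close>)
          finally show ?thesis .
        qed
        finally show ?thesis using t0 by (simp add: divide_right_mono)
      qed
      obtain i0 where i0: "i0 < n" "z$i0 \<noteq> 0"
      proof -
        have "\<exists>i<n. z$i \<noteq> 0"
        proof (rule ccontr)
          assume "\<not> (\<exists>i<n. z$i \<noteq> 0)"
          hence "z = 0\<^sub>v n" using z(1) by (intro eq_vecI) auto
          thus False using z(2) by simp
        qed
        thus ?thesis using that by blast
      qed
      have xi0: "0 < x i0" using i0 unfolding x_def by simp
      have t1: "t \<le> 1"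
      proof (rule ccontr)
        assume "\<not> t \<le> 1" hence tg: "1 < t" by simp
        have "\<not> invertible_mat (1\<^sub>m n - T)"
        proof (rule singular_lemma[OF T Tnn rows, of x i0])
          fix i assume i: "i < n"
          have "(\<Sum>j<n. T $$ (i,j) * x j)
              = (\<Sum>j<n. (if j = i then T $$ (i,i) * x i else 0) + up i j * x j + lo i j * x j)"
            by (rule sum.cong) (auto simp: up_def lo_def)
          also have "\<dots> = T $$ (i,i) * x i + (\<Sum>j<n. up i j * x j) + (\<Sum>j<n. lo i j * x j)"
            using i by (simp add: sum.distrib)
          finally have sp: "(\<Sum>j<n. T $$ (i,j) * x j) = T $$ (i,i) * x i + (\<Sum>j<n. up i j * x j) + (\<Sum>j<n. lo i j * x j)" .
          have lnn: "0 \<le> (\<Sum>j<n. lo i j * x j)" using lonn i xnn by (intro sum_nonneg) auto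
          have "(1/t) * (\<Sum>j<n. lo i j * x j) \<le> 1 * (\<Sum>j<n. lo i j * x j)"
            by (rule mult_right_mono) (use tg lnn in auto)
          thus "x i \<le> (\<Sum>j<n. T $$ (i,j) * x j)" using I1[OF i] sp unfolding d_def by (simp add: algebra_simps)
        qed (use xnn i0 xi0 in auto)
        thus False using invA unfolding A_def by simp
      qed
      define y where "y = vec n (\<lambda>i. t^i * x i)"
      have y: "y \<in> carrier_vec n" unfolding y_def by simp
      have I2: "t * (d i * y$i - (\<Sum>j<n. lo i j * y$j)) \<le> (\<Sum>j<n. up i j * y$j)" if i: "i < n" for i
      proof -
        have yj: "y$j = t^j * x j" if "j < n" for j using that unfolding y_def by simp
        have a: "t^(Suc i) * (\<Sum>j<n. up i j * x j) = (\<Sum>j<n. up i j * y$j)"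
          unfolding sum_distrib_left
        proof (rule sum.cong)
          fix j assume "j \<in> {..<n}" hence j: "j < n" by auto
          show "t^(Suc i) * (up i j * x j) = up i j * y$j"
          proof (cases "up i j = 0")
            case False
            hence "i < j" "T $$ (i,j) \<noteq> 0" unfolding up_def by (auto split: if_splits)
            hence "j = Suc i" using hess[OF i j] by fastforce
            thus ?thesis using yj[OF j] by simp
          qed simp
        qed simp
        have b: "t^(Suc i) * ((1/t) * (\<Sum>j<n. lo i j * x j)) \<le> t * (\<Sum>j<n. lo i j * y$j)"
        proof -
          have "t^(Suc i) * ((1/t) * (\<Sum>j<n. lo i j * x j)) = (\<Sum>j<n. t^i * (lo i j * x j))"
            using t0 by (simp add: sum_distrib_left)
          also have "\<dots> \<le> (\<Sum>j<n. t * (lo i j * y$j))"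
          proof (rule sum_mono)
            fix j assume "j \<in> {..<n}" hence j: "j < n" by auto
            show "t^i * (lo i j * x j) \<le> t * (lo i j * y$j)"
            proof (cases "j < i")
              case True
              have "t^i \<le> t^(Suc j)" by (rule power_decreasing) (use True t0 t1 in auto)
              hence "t^i * (lo i j * x j) \<le> t^(Suc j) * (lo i j * x j)"
                by (rule mult_right_mono) (use lonn[OF i j] xnn in auto)
              thus ?thesis using yj[OF j] by (simp add: algebra_simps)
            next
              case False thus ?thesis unfolding lo_def by simp
            qed
          qed
          also have "\<dots> = t * (\<Sum>j<n. lo i j * y$j)" by (simp add: sum_distrib_left)
          finally show ?thesis .
        qed
        have "t^(Suc i) * (d i * x i) \<le> t^(Suc i) * ((\<Sum>j<n. up i j * x j) + (1/t) * (\<Sum>j<n. lo i j * x j))"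
          by (rule mult_left_mono[OF I1[OF i]]) (use t0 in simp)
        also have "\<dots> \<le> (\<Sum>j<n. up i j * y$j) + t * (\<Sum>j<n. lo i j * y$j)"
          using a b by (simp add: distrib_left)
        finally have c: "t^(Suc i) * (d i * x i) \<le> (\<Sum>j<n. up i j * y$j) + t * (\<Sum>j<n. lo i j * y$j)" .
        have eq: "t^(Suc i) * (d i * x i) = t * (d i * y$i)" using yj[OF i] by (simp add: algebra_simps)
        have c2: "t * (d i * y$i) \<le> (\<Sum>j<n. up i j * y$j) + t * (\<Sum>j<n. lo i j * y$j)"
          using c unfolding eq .
        have "t * (d i * y$i - (\<Sum>j<n. lo i j * y$j)) = t * (d i * y$i) - t * (\<Sum>j<n. lo i j * y$j)"
          by (rule right_diff_distrib)
        thus ?thesis using c2 by linarith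
      qed
      have mono: "\<forall>v\<in>carrier_vec n. (\<forall>i<n. 0 \<le> v$i) \<longrightarrow> (\<forall>i<n. 0 \<le> (PG *\<^sub>v v)$i)"
      proof (intro ballI impI)
        fix v :: "real vec" assume v: "v \<in> carrier_vec n" and vnn: "\<forall>i<n. 0 \<le> v$i"
        have "\<forall>i<n. 0 \<le> (L *\<^sub>v (PG *\<^sub>v v))$i"
          unfolding LPG[OF v] using N1v[OF v] upnn vnn by (auto intro!: sum_nonneg)
        thus "\<forall>i<n. 0 \<le> (PG *\<^sub>v v)$i" using Lpos[of "PG *\<^sub>v v"] PG v by auto
      qed
      have ineq: "\<forall>i<n. t * y$i \<le> (PG *\<^sub>v y)$i"
      proof -
        define w where "w = PG *\<^sub>v y - t \<cdot>\<^sub>v y"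
        have w: "w \<in> carrier_vec n" unfolding w_def using PG y by auto
        have Lw: "L *\<^sub>v w = N1 *\<^sub>v y - t \<cdot>\<^sub>v (L *\<^sub>v y)"
          unfolding w_def using mult_minus_distrib_mat_vec[OF L, of "PG *\<^sub>v y" "t \<cdot>\<^sub>v y"] LPG[OF y]
            mult_mat_vec[OF L y] PG y by auto
        have "\<forall>i<n. 0 \<le> (L *\<^sub>v w)$i"
        proof (intro allI impI)
          fix i assume i: "i < n"
          have "(L *\<^sub>v w)$i = (N1 *\<^sub>v y)$i - t * (L *\<^sub>v y)$i" unfolding Lw using i L N1 y by simp
          thus "0 \<le> (L *\<^sub>v w)$i" using I2[OF i] N1v[OF y i] Lv[OF y i] by simp
        qed
        from Lpos[OF w this] show ?thesis unfolding w_def using PG y by auto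
      qed
      have "t \<le> rho PG"
        by (rule cw_lower[OF PG y _ _ _ t0 mono ineq, of i0]) (use i0 xi0 t0 xnn in \<open>auto simp: y_def\<close>)
      thus ?thesis using rA t_def by simp
    qed
  qed
  thus ?thesis unfolding PG_def PA_def L_def U_def N1_def N2_def A_def by simp
qed

end
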